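(* Let $X$ be an (infinite) topological space. Then $|X|\le nh(X)^{c(X)\chi(X)}$.
   Context: A non-empty subset $A$ of a topological space $X$ is called finitely non-Hausdorff if for every non-empty finite subset $F\subseteq A$ and every family $\{U_x:x\in F\}$ where each $U_x$ is an open neighborhood of $x$, we have $\bigcap_{x\in F}U_x\neq\emptyset$. The non-Hausdorff number is $nh(X):=1+\sup\{|A|: A\subseteq X \text{ is finitely non-Hausdorff}\}$. The cellularity is $c(X):=\sup\{|\mathcal U|:\mathcal U$ a family of pairwise disjoint non-empty open subsets of $X\}+\omega$, and $\chi(X)=\sup_{x\in X}\chi(x,X)$ is the character, where $\chi(x,X)$ is the minimal cardinality of a local base at $x$. Throughout the paper, "space" means infinite topological space; exponentiation is cardinal exponentiation. *)

theory Defs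
  imports "HOL-Analysis.Analysis"
begin

text \<open>Cardinals are represented, as in HOL's BNF cardinal library, by well-order
relations; card_of A is the cardinal of the set A, <=o / =o compare cardinals.\<close>

text \<open>S realizes the supremum of the cardinalities of the members of F
(least upper bound; all cardinals not exceeding card_of S are realized by subsets
of S, so quantifying over sets of the same type as S suffices).\<close>
definition is_card_sup :: "'x set set \<Rightarrow> 'b set \<Rightarrow> bool" where
  "is_card_sup F S \<longleftrightarrow>
     (\<forall>A\<in>F. (card_of A, card_of S) \<in> ordLeq) \<and>
     (\<forall>B::'b set. (\<forall>A\<in>F. (card_of A, card_of B) \<in> ordLeq) \<longrightarrow> (card_of S, card_of B) \<in> ordLeq)"

definition finitely_non_hausdorff :: "'a topology \<Rightarrow> 'a set \<Rightarrow> bool" where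
  "finitely_non_hausdorff X A \<longleftrightarrow>
     A \<noteq> {} \<and> A \<subseteq> topspace X \<and>
     (\<forall>F U. F \<subseteq> A \<and> finite F \<and> F \<noteq> {} \<and> (\<forall>x\<in>F. openin X (U x) \<and> x \<in> U x)
        \<longrightarrow> (\<Inter>x\<in>F. U x) \<noteq> {})"

text \<open>card_of N equals nh(X) = 1 + sup { |A| : A finitely non-Hausdorff }.\<close>
definition is_nh :: "'a topology \<Rightarrow> 'b set \<Rightarrow> bool" where
  "is_nh X N \<longleftrightarrow> (\<exists>S::'a set. is_card_sup {A. finitely_non_hausdorff X A} S \<and>
       (card_of N, BNF_Cardinal_Arithmetic.csum (card_of (UNIV::unit set)) (card_of S)) \<in> ordIso)"

definition cellular_family :: "'a topology \<Rightarrow> 'a set set \<Rightarrow> bool" where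
  "cellular_family X \<U> \<longleftrightarrow> (\<forall>U\<in>\<U>. openin X U \<and> U \<noteq> {}) \<and> pairwise disjnt \<U>"

text \<open>card_of C equals c(X) = sup { |U| : U cellular } + omega.\<close>
definition is_cellularity :: "'a topology \<Rightarrow> 'b set \<Rightarrow> bool" where
  "is_cellularity X C \<longleftrightarrow> (\<exists>S::'a set set set. is_card_sup {\<U>. cellular_family X \<U>} S \<and>
       (card_of C, BNF_Cardinal_Arithmetic.csum (card_of S) natLeq) \<in> ordIso)"

definition local_base :: "'a topology \<Rightarrow> 'a \<Rightarrow> 'a set set \<Rightarrow> bool" where
  "local_base X x \<B> \<longleftrightarrow> (\<forall>B\<in>\<B>. openin X B \<and> x \<in> B) \<and>
     (\<forall>U. openin X U \<and> x \<in> U \<longrightarrow> (\<exists>B\<in>\<B>. B \<subseteq> U))"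

definition minimal_local_base :: "'a topology \<Rightarrow> 'a \<Rightarrow> 'a set set \<Rightarrow> bool" where
  "minimal_local_base X x \<B> \<longleftrightarrow> local_base X x \<B> \<and>
     (\<forall>\<B>'. local_base X x \<B>' \<longrightarrow> (card_of \<B>, card_of \<B>') \<in> ordLeq)"

definition is_character :: "'a topology \<Rightarrow> 'b set \<Rightarrow> bool" where
  "is_character X H \<longleftrightarrow> (\<exists>S::'a set set set.
       is_card_sup {\<B>. \<exists>x\<in>topspace X. minimal_local_base X x \<B>} S \<and>
       (card_of H, card_of S) \<in> ordIso)"

end

theory Submission
  imports Defs "HOL-Algebra.Free_Abelian_Groups"
begin


locale nhp =
  fixes X :: "'a topology" and I :: "'i set" and e :: "'a \<Rightarrow> 'i \<Rightarrow> 'a set" and Th :: "'t set"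
  assumes I_inf: "infinite I"
    and e_open: "\<And>x i. x \<in> topspace X \<Longrightarrow> i \<in> I \<Longrightarrow> openin X (e x i) \<and> x \<in> e x i"
    and e_base: "\<And>x V. x \<in> topspace X \<Longrightarrow> openin X V \<Longrightarrow> x \<in> V \<Longrightarrow> \<exists>i\<in>I. e x i \<subseteq> V"
    and cell: "\<And>\<U>. cellular_family X \<U> \<Longrightarrow> |\<U>| \<le>o |I|"
    and IT: "|I| <o |Th|"
    and FT: "|Func I Th| \<le>o |Th|"
    and fnh: "\<And>A. finitely_non_hausdorff X A \<Longrightarrow> |A| \<le>o |Th|"
begin

definition U where "U x T = topspace X \<inter> \<Inter>(e x ` T)"
definition W where "W F T = topspace X \<inter> (\<Inter>q\<in>F. U q T)"

definition realize where
  "realize K Q y \<longleftrightarrow> (\<forall>T\<in>Fpow I. U y T \<inter> K T = {} \<and>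
      (\<forall>F. F \<subseteq> Q \<and> finite F \<and> F \<noteq> {} \<and> W F T \<inter> U y T = {} \<longrightarrow> W F T \<subseteq> K T))"

definition Inv where
  "Inv K Q \<longleftrightarrow> Q \<subseteq> topspace X \<and>
     (\<forall>F T. F \<subseteq> Q \<and> finite F \<and> F \<noteq> {} \<and> T \<in> Fpow I \<longrightarrow> \<not> W F T \<subseteq> K T)"

lemma U_sub: "U x T \<subseteq> topspace X" unfolding U_def by auto

lemma U_mem: "x \<in> topspace X \<Longrightarrow> T \<in> Fpow I \<Longrightarrow> x \<in> U x T"
  unfolding U_def Fpow_def using e_open by auto

lemma U_open: assumes "x \<in> topspace X" "T \<in> Fpow I" shows "openin X (U x T)"
proof (cases "T = {}")
  case True thus ?thesis by (simp add: U_def)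
next
  case False
  have "openin X (\<Inter>(e x ` T))"
    by (rule openin_Inter) (use assms False e_open in \<open>auto simp: Fpow_def\<close>)
  moreover have "\<Inter>(e x ` T) \<subseteq> topspace X"
  proof -
    obtain t where "t \<in> T" using False by blast
    hence "t \<in> I" using assms(2) by (auto simp: Fpow_def)
    hence "e x t \<subseteq> topspace X" using e_open[OF assms(1)] openin_subset by blast
    thus ?thesis using \<open>t \<in> T\<close> by blast
  qed
  ultimately show ?thesis unfolding U_def by (simp add: Int_absorb1)
qed

lemma U_anti: "T \<subseteq> T' \<Longrightarrow> U x T' \<subseteq> U x T" unfolding U_def by auto

lemma W_open: assumes "finite F" "F \<subseteq> topspace X" "T \<in> Fpow I" shows "openin X (W F T)"
proof (cases "F = {}")
  case True thus ?thesis by (simp add: W_def)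
next
  case False
  have "openin X (\<Inter>((\<lambda>q. U q T) ` F))"
    by (rule openin_Inter) (use assms False U_open in auto)
  moreover have "\<Inter>((\<lambda>q. U q T) ` F) \<subseteq> topspace X" using False U_sub by blast
  ultimately show ?thesis unfolding W_def by (simp add: Int_absorb1)
qed

lemma common_T:
  assumes "finite F" "F \<subseteq> topspace X" "\<forall>q\<in>F. openin X (V q) \<and> q \<in> V q"
  shows "\<exists>T\<in>Fpow I. \<forall>q\<in>F. U q T \<subseteq> V q"
proof -
  have "\<forall>q\<in>F. \<exists>i\<in>I. e q i \<subseteq> V q" using assms e_base by blast
  then obtain ix where ix: "\<forall>q\<in>F. ix q \<in> I \<and> e q (ix q) \<subseteq> V q" by metis
  show ?thesis
  proof (intro bexI ballI)
    show "ix ` F \<in> Fpow I" using ix assms(1) by (auto simp: Fpow_def)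
    fix q assume "q \<in> F"
    thus "U q (ix ` F) \<subseteq> V q" using ix unfolding U_def by blast
  qed
qed

lemma inv_ext:
  assumes inv: "Inv K Q" and y: "y \<in> topspace X" and r: "realize K Q y"
  shows "Inv K (insert y Q)"
  unfolding Inv_def
proof (intro conjI allI impI)
  show "insert y Q \<subseteq> topspace X" using inv y by (auto simp: Inv_def)
  fix F T assume A: "F \<subseteq> insert y Q \<and> finite F \<and> F \<noteq> {} \<and> T \<in> Fpow I"
  show "\<not> W F T \<subseteq> K T"
  proof (cases "y \<in> F")
    case False
    hence "F \<subseteq> Q" using A by auto
    thus ?thesis using inv A by (auto simp: Inv_def)
  next
    case True
    define F' where "F' = F - {y}"
    have F': "F' \<subseteq> Q" "finite F'" using A by (auto simp: F'_def)
    have dis: "U y T \<inter> K T = {}" using r A by (auto simp: realize_def)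
    show ?thesis
    proof (cases "F' = {}")
      case True
      hence "F = {y}" using \<open>y \<in> F\<close> F'_def by auto
      hence "y \<in> W F T" using U_mem[OF y] A by (auto simp: W_def y)
      moreover have "y \<notin> K T" using dis U_mem[OF y] A by auto
      ultimately show ?thesis by auto
    next
      case False
      have "\<not> W F' T \<subseteq> K T" using inv F' False A by (auto simp: Inv_def)
      hence ne: "W F' T \<inter> U y T \<noteq> {}" using r F' False A by (auto simp: realize_def)
      have "W F T = W F' T \<inter> U y T" using True U_sub unfolding W_def F'_def by blast
      thus ?thesis using ne dis by auto
    qed
  qed
qed

lemma inv_fnh:
  assumes inv: "Inv K Q" and ne: "Q \<noteq> {}"
  shows "finitely_non_hausdorff X Q"
  unfolding finitely_non_hausdorff_def
proof (intro conjI allI impI)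
  show "Q \<noteq> {}" by fact
  show "Q \<subseteq> topspace X" using inv by (simp add: Inv_def)
  fix F V assume A: "F \<subseteq> Q \<and> finite F \<and> F \<noteq> {} \<and> (\<forall>x\<in>F. openin X (V x) \<and> x \<in> V x)"
  have Ft: "F \<subseteq> topspace X" using A inv by (auto simp: Inv_def)
  obtain T where T: "T \<in> Fpow I" "\<forall>q\<in>F. U q T \<subseteq> V q" using common_T[of F V] A Ft by blast
  have "\<not> W F T \<subseteq> K T" using inv A T by (auto simp: Inv_def)
  hence "W F T \<noteq> {}" by auto
  moreover have "W F T \<subseteq> (\<Inter>x\<in>F. V x)" using T unfolding W_def by blast
  ultimately show "(\<Inter>x\<in>F. V x) \<noteq> {}" by blast
qed

lemma inv_zorn: "\<exists>Q. Inv K Q \<and> (\<forall>Q'. Inv K Q' \<and> Q \<subseteq> Q' \<longrightarrow> Q' = Q)"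
proof -
  have "\<exists>M\<in>{Q. Inv K Q}. \<forall>Z\<in>{Q. Inv K Q}. M \<subseteq> Z \<longrightarrow> Z = M"
  proof (rule Zorn_Lemma, intro ballI)
    fix C assume C: "C \<in> chains {Q. Inv K Q}"
    show "\<Union>C \<in> {Q. Inv K Q}"
    proof (cases "C = {}")
      case True thus ?thesis by (simp add: Inv_def)
    next
      case False
      show ?thesis unfolding mem_Collect_eq Inv_def
      proof (intro conjI allI impI)
        show "\<Union>C \<subseteq> topspace X" using C by (auto simp: chains_def Inv_def)
        fix F T assume A: "F \<subseteq> \<Union>C \<and> finite F \<and> F \<noteq> {} \<and> T \<in> Fpow I"
        have "subset.chain {Q. Inv K Q} C" using C by (simp add: chains_alt_def)
        then obtain B where "B \<in> C" "F \<subseteq> B"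
          using finite_subset_Union_chain[of F C] A False by blast
        have "Inv K B" using C \<open>B \<in> C\<close> by (auto simp: chains_def)
        thus "\<not> W F T \<subseteq> K T" using A \<open>F \<subseteq> B\<close> unfolding Inv_def by blast
      qed
    qed
  qed
  then obtain M where "Inv K M" "\<forall>Z. Inv K Z \<longrightarrow> M \<subseteq> Z \<longrightarrow> Z = M" by blast
  thus ?thesis by blast
qed

lemma good_False:
  assumes good: "\<forall>Q. Q \<subseteq> topspace X \<and> |Q| \<le>o |Th| \<longrightarrow> (\<exists>y\<in>topspace X - Q. realize K Q y)"
  shows False
proof -
  obtain Q where Q: "Inv K Q" and max: "\<forall>Q'. Inv K Q' \<and> Q \<subseteq> Q' \<longrightarrow> Q' = Q"
    using inv_zorn by blast
  have Qt: "Q \<subseteq> topspace X" using Q by (simp add: Inv_def)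
  have nle: "\<not> |Q| \<le>o |Th|"
  proof
    assume "|Q| \<le>o |Th|"
    then obtain y where y: "y \<in> topspace X - Q" "realize K Q y" using good Qt by blast
    hence "Inv K (insert y Q)" using inv_ext Q by auto
    hence "insert y Q = Q" using max by blast
    thus False using y by auto
  qed
  have "Q \<noteq> {}"
  proof
    assume "Q = {}"
    thus False using nle card_of_empty[of Th] by simp
  qed
  hence "|Q| \<le>o |Th|" using fnh[OF inv_fnh[OF Q]] by blast
  thus False using nle by (rule notE[rotated])
qed

end


context nhp begin

lemma dense_sub:
  assumes op: "\<forall>j\<in>J. openin X (Op j)"
  shows "\<exists>J'\<subseteq>J. |J'| \<le>o |I| \<and> (\<Union>j\<in>J. Op j) \<subseteq> X closure_of (\<Union>j\<in>J'. Op j)"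
proof -
  define A where "A = {\<V>. cellular_family X \<V> \<and> (\<forall>V\<in>\<V>. \<exists>j\<in>J. V \<subseteq> Op j)}"
  have "\<exists>M\<in>A. \<forall>Z\<in>A. M \<subseteq> Z \<longrightarrow> Z = M"
  proof (rule Zorn_Lemma, intro ballI)
    fix C assume C: "C \<in> chains A"
    hence CA: "C \<subseteq> A" and ch: "\<forall>B\<in>C. \<forall>B'\<in>C. B \<subseteq> B' \<or> B' \<subseteq> B"
      by (auto simp: chains_def chain_subset_def)
    have h1: "\<forall>V\<in>\<Union>C. openin X V \<and> V \<noteq> {}"
    proof
      fix V assume "V \<in> \<Union>C"
      then obtain B where "B \<in> C" "V \<in> B" by blast
      hence "B \<in> A" using CA by blast
      thus "openin X V \<and> V \<noteq> {}" using \<open>V \<in> B\<close> by (auto simp: A_def cellular_family_def)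
    qed
    have h2: "\<forall>V\<in>\<Union>C. \<exists>j\<in>J. V \<subseteq> Op j"
    proof
      fix V assume "V \<in> \<Union>C"
      then obtain B where "B \<in> C" "V \<in> B" by blast
      hence "B \<in> A" using CA by blast
      thus "\<exists>j\<in>J. V \<subseteq> Op j" using \<open>V \<in> B\<close> by (auto simp: A_def)
    qed
    have h3: "pairwise disjnt (\<Union>C)"
        unfolding pairwise_def
      proof (intro ballI impI)
        fix V V' assume V: "V \<in> \<Union>C" and V': "V' \<in> \<Union>C" and ne: "V \<noteq> V'"
        obtain B where B: "B \<in> C" "V \<in> B" using V by blast
        obtain B' where B': "B' \<in> C" "V' \<in> B'" using V' by blast
        from ch B(1) B'(1) have "B \<subseteq> B' \<or> B' \<subseteq> B" by blast
        hence "\<exists>D\<in>C. V \<in> D \<and> V' \<in> D" using B B' by blast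
        then obtain D where D: "D \<in> C" "V \<in> D" "V' \<in> D" by blast
        hence "pairwise disjnt D" using CA by (auto simp: A_def cellular_family_def)
        thus "disjnt V V'" using D ne by (auto simp: pairwise_def)
      qed
    show "\<Union>C \<in> A" unfolding A_def cellular_family_def using h1 h2 h3 by blast
  qed
  then obtain M where M: "M \<in> A" and max: "\<forall>Z\<in>A. M \<subseteq> Z \<longrightarrow> Z = M" by blast
  have "\<forall>V\<in>M. \<exists>j\<in>J. V \<subseteq> Op j" using M by (simp add: A_def)
  then obtain jf where jf: "\<forall>V\<in>M. jf V \<in> J \<and> V \<subseteq> Op (jf V)" by metis
  have cM: "cellular_family X M" using M by (simp add: A_def)
  show ?thesis
  proof (intro exI conjI)
    show "jf ` M \<subseteq> J" using jf by blast
    show "|jf ` M| \<le>o |I|" by (rule ordLeq_transitive[OF card_of_image cell[OF cM]])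
    show "(\<Union>j\<in>J. Op j) \<subseteq> X closure_of (\<Union>j\<in>jf ` M. Op j)"
    proof
      fix x assume "x \<in> (\<Union>j\<in>J. Op j)"
      then obtain j where j: "j \<in> J" "x \<in> Op j" by blast
      show "x \<in> X closure_of (\<Union>j\<in>jf ` M. Op j)"
      proof (rule ccontr)
        assume nx: "x \<notin> X closure_of (\<Union>j\<in>jf ` M. Op j)"
        have xt: "x \<in> topspace X" using j op openin_subset by blast
        then obtain G where G: "openin X G" "x \<in> G" and Gd: "\<forall>y\<in>(\<Union>j\<in>jf ` M. Op j). y \<notin> G"
          using nx unfolding in_closure_of by blast
        define G' where "G' = G \<inter> Op j"
        have G'o: "openin X G'" using G op j by (auto simp: G'_def)
        have G'x: "x \<in> G'" using G j by (auto simp: G'_def)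
        have disj: "\<forall>V\<in>M. disjnt G' V"
        proof
          fix V assume "V \<in> M"
          hence "V \<subseteq> (\<Union>j\<in>jf ` M. Op j)" using jf by blast
          thus "disjnt G' V" using Gd by (auto simp: disjnt_def G'_def)
        qed
        have nin: "G' \<notin> M"
        proof
          assume "G' \<in> M"
          hence "G' \<subseteq> (\<Union>j\<in>jf ` M. Op j)" using jf by blast
          thus False using G'x Gd G'_def by blast
        qed
        have k1: "\<forall>V\<in>insert G' M. openin X V \<and> V \<noteq> {}"
          using G'o G'x cM by (auto simp: cellular_family_def)
        have k2: "\<forall>V\<in>insert G' M. \<exists>j\<in>J. V \<subseteq> Op j" using j jf by (auto simp: G'_def)
        have "pairwise disjnt M" using cM by (simp add: cellular_family_def)
        moreover have "\<forall>V\<in>M. G' \<noteq> V \<longrightarrow> disjnt G' V \<and> disjnt V G'"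
          using disj by (simp add: disjnt_def Int_commute)
        ultimately have k3: "pairwise disjnt (insert G' M)"
          by (simp add: pairwise_insert) blast
        have "insert G' M \<in> A" unfolding A_def cellular_family_def using k1 k2 k3 by blast
        hence "insert G' M = M" using max by blast
        thus False using nin by blast
      qed
    qed
  qed
qed

end


context nhp begin

lemma Th_inf: "infinite Th"
proof
  assume "finite Th"
  hence "|Th| <o |I|" using finite_ordLess_infinite2 I_inf by blast
  thus False using not_ordLess_ordLeq[OF IT] ordLess_imp_ordLeq by blast
qed

lemma I_le_Th: "|I| \<le>o |Th|" using IT ordLess_imp_ordLeq by blast

lemma FpowI: "|Fpow I| \<le>o |I|"
  using card_of_Fpow_infinite[OF I_inf] ordIso_iff_ordLeq by blast

lemma fin_le_I: "finite F \<Longrightarrow> |F| \<le>o |I|"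
  using finite_ordLess_infinite2 I_inf ordLess_imp_ordLeq by blast

lemma Fpow_le: assumes "|A| \<le>o |Th|" shows "|Fpow A| \<le>o |Th|"
proof -
  have "|Fpow A| \<le>o |Fpow Th|" using card_of_Fpow_mono[OF assms] .
  moreover have "|Fpow Th| \<le>o |Th|"
    using card_of_Fpow_infinite[OF Th_inf] ordIso_iff_ordLeq by blast
  ultimately show ?thesis by (rule ordLeq_transitive)
qed

lemma Func_le: assumes "|A| \<le>o |Th|" shows "|Func I A| \<le>o |Th|"
proof -
  have "|A| ^c |I| \<le>o |Th| ^c |I|"
    by (rule cexp_mono1[OF assms card_of_Card_order])
  hence "|Func I A| \<le>o |Func I Th|" by (simp add: cexp_def Field_card_of)
  thus ?thesis using FT by (rule ordLeq_transitive)
qed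

lemma insert_le: assumes "|A| \<le>o |Th|" shows "|insert a A| \<le>o |Th|"
proof -
  have "Th \<noteq> {}" using Th_inf by auto
  hence "|{a}| \<le>o |Th|" by (rule card_of_singl_ordLeq)
  hence "|{a} \<union> A| \<le>o |Th|" using card_of_Un_ordLeq_infinite[OF Th_inf] assms by blast
  thus ?thesis by simp
qed

lemma Bnd_le: assumes "|A| \<le>o |Th|" shows "|{S. S \<subseteq> A \<and> |S| \<le>o |I| }| \<le>o |Th|"
proof -
  have sub: "{S. S \<subseteq> A \<and> |S| \<le>o |I| } \<subseteq> insert {} ((\<lambda>f. f ` I) ` Func I A)"
  proof
    fix S assume S: "S \<in> {S. S \<subseteq> A \<and> |S| \<le>o |I| }"
    show "S \<in> insert {} ((\<lambda>f. f ` I) ` Func I A)"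
    proof (cases "S = {}")
      case True thus ?thesis by blast
    next
      case False
      have "|S| \<le>o |I|" using S by blast
      hence "\<exists>g. g ` I = S" by (subst card_of_ordLeq2[OF False])
      then obtain g where g: "g ` I = S" by (elim exE)
      define f where "f = (\<lambda>i. if i \<in> I then g i else undefined)"
      have "f \<in> Func I A" using g S by (auto simp: f_def Func_def)
      moreover have "f ` I = S" using g by (auto simp: f_def)
      ultimately show ?thesis by blast
    qed
  qed
  have "|(\<lambda>f. f ` I) ` Func I A| \<le>o |Th|"
    by (rule ordLeq_transitive[OF card_of_image Func_le[OF assms]])
  hence "|insert {} ((\<lambda>f. f ` I) ` Func I A)| \<le>o |Th|" by (rule insert_le)
  with card_of_mono1[OF sub] show ?thesis by (rule ordLeq_transitive)
qed

definition FinNE where "FinNE A = {F. F \<subseteq> A \<and> finite F \<and> F \<noteq> {}}"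

definition Dat where
  "Dat A = {g. \<forall>T. (T \<in> Fpow I \<longrightarrow> g T \<subseteq> FinNE A \<and> |g T| \<le>o |I| ) \<and> (T \<notin> Fpow I \<longrightarrow> g T = {})}"

lemma Dat_mono: "A \<subseteq> B \<Longrightarrow> Dat A \<subseteq> Dat B"
  unfolding Dat_def FinNE_def by blast

lemma Dat_le: assumes "|A| \<le>o |Th|" shows "|Dat A| \<le>o |Th|"
proof -
  define B where "B = {S. S \<subseteq> FinNE A \<and> |S| \<le>o |I| }"
  have "FinNE A \<subseteq> Fpow A" by (auto simp: FinNE_def Fpow_def)
  hence "|FinNE A| \<le>o |Fpow A|" by (rule card_of_mono1)
  hence FA: "|FinNE A| \<le>o |Th|" using Fpow_le[OF assms] by (rule ordLeq_transitive)
  have B: "|B| \<le>o |Th|" unfolding B_def by (rule Bnd_le[OF FA])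
  have sub: "Dat A \<subseteq> (\<lambda>f T. if T \<in> Fpow I then f T else {}) ` Func (Fpow I) B"
  proof
    fix g assume g: "g \<in> Dat A"
    define f where "f = (\<lambda>T. if T \<in> Fpow I then g T else undefined)"
    have "f \<in> Func (Fpow I) B" using g by (auto simp: f_def Func_def Dat_def B_def)
    moreover have "g = (\<lambda>T. if T \<in> Fpow I then f T else {})"
      using g by (auto simp: f_def Dat_def fun_eq_iff)
    ultimately show "g \<in> (\<lambda>f T. if T \<in> Fpow I then f T else {}) ` Func (Fpow I) B" by blast
  qed
  have "|B| ^c |Fpow I| \<le>o |Th| ^c |I|"
    by (rule cexp_mono'[OF B FpowI]) (auto simp: Field_card_of Fpow_def)
  hence "|Func (Fpow I) B| \<le>o |Func I Th|" by (simp add: cexp_def Field_card_of)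
  hence "|Func (Fpow I) B| \<le>o |Th|" using FT by (rule ordLeq_transitive)
  hence "|(\<lambda>f T. if T \<in> Fpow I then f T else {}) ` Func (Fpow I) B| \<le>o |Th|"
    by (rule ordLeq_transitive[OF card_of_image])
  with card_of_mono1[OF sub] show ?thesis by (rule ordLeq_transitive)
qed

definition code where "code g = (\<lambda>T. X closure_of (\<Union>F\<in>g T. W F T))"

lemma realize_mono: "realize K M y \<Longrightarrow> Q \<subseteq> M \<Longrightarrow> realize K Q y"
  unfolding realize_def by blast

lemma exists_code:
  assumes M: "M \<subseteq> topspace X" and y: "y \<in> topspace X"
  shows "\<exists>g\<in>Dat M. realize (code g) M y"
proof -
  have "\<forall>T\<in>Fpow I. \<exists>J'. J' \<subseteq> {F\<in>FinNE M. W F T \<inter> U y T = {}} \<and> |J'| \<le>o |I| \<and>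
      (\<Union>F\<in>{F\<in>FinNE M. W F T \<inter> U y T = {}}. W F T) \<subseteq> X closure_of (\<Union>F\<in>J'. W F T)"
  proof
    fix T assume T: "T \<in> Fpow I"
    have "\<forall>F\<in>{F\<in>FinNE M. W F T \<inter> U y T = {}}. openin X (W F T)"
      using W_open M T by (auto simp: FinNE_def)
    thus "\<exists>J'. J' \<subseteq> {F\<in>FinNE M. W F T \<inter> U y T = {}} \<and> |J'| \<le>o |I| \<and>
      (\<Union>F\<in>{F\<in>FinNE M. W F T \<inter> U y T = {}}. W F T) \<subseteq> X closure_of (\<Union>F\<in>J'. W F T)"
      by (rule dense_sub)
  qed
  hence "\<exists>h. \<forall>T\<in>Fpow I. h T \<subseteq> {F\<in>FinNE M. W F T \<inter> U y T = {}} \<and> |h T| \<le>o |I| \<and>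
      (\<Union>F\<in>{F\<in>FinNE M. W F T \<inter> U y T = {}}. W F T) \<subseteq> X closure_of (\<Union>F\<in>h T. W F T)"
    by (rule bchoice)
  then obtain h where h: "\<forall>T\<in>Fpow I. h T \<subseteq> {F\<in>FinNE M. W F T \<inter> U y T = {}} \<and> |h T| \<le>o |I| \<and>
      (\<Union>F\<in>{F\<in>FinNE M. W F T \<inter> U y T = {}}. W F T) \<subseteq> X closure_of (\<Union>F\<in>h T. W F T)"
    by (elim exE)
  define g where "g = (\<lambda>T. if T \<in> Fpow I then h T else {})"
  have gD: "g \<in> Dat M"
    unfolding Dat_def mem_Collect_eq
  proof (intro allI conjI impI)
    fix T assume T: "T \<in> Fpow I"
    have "g T = h T" using T by (simp add: g_def)
    moreover have "h T \<subseteq> {F\<in>FinNE M. W F T \<inter> U y T = {}}" "|h T| \<le>o |I|" using h T by blast+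
    ultimately show "g T \<subseteq> FinNE M" "|g T| \<le>o |I|" by auto
  next
    fix T assume "T \<notin> Fpow I" thus "g T = {}" by (simp add: g_def)
  qed
  have "\<forall>T\<in>Fpow I. U y T \<inter> code g T = {} \<and>
      (\<forall>F. F \<subseteq> M \<and> finite F \<and> F \<noteq> {} \<and> W F T \<inter> U y T = {} \<longrightarrow> W F T \<subseteq> code g T)"
  proof
    fix T assume T: "T \<in> Fpow I"
    have hT: "h T \<subseteq> {F\<in>FinNE M. W F T \<inter> U y T = {}}" using h T by blast
    have "g T = h T" using T by (simp add: g_def)
    hence "U y T \<inter> (\<Union>F\<in>g T. W F T) = {}" using hT by blast
    hence A: "U y T \<inter> code g T = {}"
      unfolding code_def by (subst openin_Int_closure_of_eq_empty[OF U_open[OF y T]])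
    have B: "\<forall>F. F \<subseteq> M \<and> finite F \<and> F \<noteq> {} \<and> W F T \<inter> U y T = {} \<longrightarrow> W F T \<subseteq> code g T"
    proof (intro allI impI)
      fix F assume F: "F \<subseteq> M \<and> finite F \<and> F \<noteq> {} \<and> W F T \<inter> U y T = {}"
      hence "F \<in> {F\<in>FinNE M. W F T \<inter> U y T = {}}" by (auto simp: FinNE_def)
      hence "W F T \<subseteq> (\<Union>F\<in>{F\<in>FinNE M. W F T \<inter> U y T = {}}. W F T)" by blast
      also have "\<dots> \<subseteq> X closure_of (\<Union>F\<in>h T. W F T)" using h T by blast
      also have "\<dots> = code g T" using \<open>g T = h T\<close> unfolding code_def by simp
      finally show "W F T \<subseteq> code g T" .
    qed
    show "U y T \<inter> code g T = {} \<and>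
      (\<forall>F. F \<subseteq> M \<and> finite F \<and> F \<noteq> {} \<and> W F T \<inter> U y T = {} \<longrightarrow> W F T \<subseteq> code g T)"
      using A B by blast
  qed
  hence "realize (code g) M y" unfolding realize_def .
  thus ?thesis using gD by blast
qed

end



locale nhp2 = nhp X I e Th for X :: "'a topology" and I :: "'i set" and e and Th :: "'t set" +
  fixes Qb :: "('i set \<Rightarrow> 'a set) \<Rightarrow> 'a set"
  assumes Qb: "\<And>K. Qb K \<subseteq> topspace X \<and> |Qb K| \<le>o |Th| \<and> (\<forall>y\<in>topspace X - Qb K. \<not> realize K (Qb K) y)"
begin

definition Step where "Step A = topspace X \<inter> (A \<union> (\<Union>g\<in>Dat A. Qb (code g)))"

lemma Step_le: assumes A: "|A| \<le>o |Th|" shows "|Step A| \<le>o |Th|"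
proof -
  have Q: "\<forall>g\<in>Dat A. |Qb (code g)| \<le>o |Th|" using Qb by blast
  have "|\<Union>g\<in>Dat A. Qb (code g)| \<le>o |Th|"
    by (rule card_of_UNION_ordLeq_infinite[OF Th_inf Dat_le[OF A] Q])
  hence 2: "|A \<union> (\<Union>g\<in>Dat A. Qb (code g))| \<le>o |Th|"
    by (rule card_of_Un_ordLeq_infinite[OF Th_inf A])
  have "Step A \<subseteq> A \<union> (\<Union>g\<in>Dat A. Qb (code g))" by (auto simp: Step_def)
  from card_of_mono1[OF this] 2 show ?thesis by (rule ordLeq_transitive)
qed

definition rho where "rho = cardSuc |I|"

lemma rho_card: "Card_order rho" unfolding rho_def by (rule cardSuc_Card_order[OF card_of_Card_order])

lemma rho_wo: "wo_rel rho" using rho_card by (rule Card_order_wo_rel)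

definition H where "H f i = Step (\<Union>j\<in>underS rho i. f j)"

definition As where "As = wo_rel.worec rho H"

lemma As_eq: "As i = Step (\<Union>j\<in>underS rho i. As j)"
proof -
  have "wo_rel.adm_wo rho H"
    unfolding wo_rel.adm_wo_def[OF rho_wo] H_def by auto
  hence "As = H As" unfolding As_def by (rule wo_rel.worec_fixpoint[OF rho_wo])
  thus ?thesis by (metis H_def)
qed

lemma As_top: "As i \<subseteq> topspace X" by (subst As_eq) (auto simp: Step_def)

lemma chain: "relChain rho As"
  unfolding relChain_def
proof (intro allI impI)
  fix i j assume ij: "(i, j) \<in> rho"
  show "As i \<subseteq> As j"
  proof (cases "i = j")
    case True thus ?thesis by simp
  next
    case False
    hence "i \<in> underS rho j" using ij by (simp add: underS_def)
    hence "As i \<subseteq> (\<Union>k\<in>underS rho j. As k)" by blast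
    moreover have "(\<Union>k\<in>underS rho j. As k) \<subseteq> Step (\<Union>k\<in>underS rho j. As k)"
      using As_top by (auto simp: Step_def)
    ultimately show ?thesis by (subst (2) As_eq) blast
  qed
qed

lemma underS_le: assumes "i \<in> Field rho" shows "|underS rho i| \<le>o |I|"
proof -
  have "|underS rho i| <o rho" by (rule card_of_underS[OF rho_card assms])
  thus ?thesis unfolding rho_def
    by (rule iffD1[OF cardSuc_ordLeq_ordLess[OF card_of_Card_order card_of_Card_order]])
qed

lemma As_le: "i \<in> Field rho \<Longrightarrow> |As i| \<le>o |Th|"
proof (induction i rule: wo_rel.well_order_induct[OF rho_wo])
  case (1 i)
  have IH: "\<forall>j\<in>underS rho i. |As j| \<le>o |Th|"
    using 1 by (auto simp: underS_def intro: FieldI1)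
  have "|underS rho i| \<le>o |Th|" using underS_le[OF 1(2)] I_le_Th by (rule ordLeq_transitive)
  hence "|\<Union>j\<in>underS rho i. As j| \<le>o |Th|"
    by (rule card_of_UNION_ordLeq_infinite[OF Th_inf _ IH])
  hence "|Step (\<Union>j\<in>underS rho i. As j)| \<le>o |Th|" by (rule Step_le)
  thus ?case by (subst As_eq)
qed

definition M where "M = (\<Union>i\<in>Field rho. As i)"

lemma M_le: "|M| \<le>o |Th|"
proof -
  have "rho \<le>o |Th|" unfolding rho_def
    by (rule iffD1[OF cardSuc_ordLess_ordLeq[OF card_of_Card_order card_of_Card_order] IT])
  hence F: "|Field rho| \<le>o |Th|"
    by (rule ordIso_ordLeq_trans[OF card_of_Field_ordIso[OF rho_card]])
  have A: "\<forall>i\<in>Field rho. |As i| \<le>o |Th|" using As_le by blast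
  show ?thesis unfolding M_def by (rule card_of_UNION_ordLeq_infinite[OF Th_inf F A])
qed

lemma nomax: assumes i: "i \<in> Field rho" shows "\<exists>j\<in>Field rho. (i, j) \<in> rho \<and> j \<noteq> i"
proof (rule ccontr)
  assume "\<not> ?thesis"
  hence nm: "\<forall>j\<in>Field rho. (i, j) \<in> rho \<longrightarrow> j = i" by blast
  have "Field rho \<subseteq> insert i (underS rho i)"
  proof
    fix j assume j: "j \<in> Field rho"
    have "(i, j) \<in> rho \<or> (j, i) \<in> rho" using wo_rel.TOTALS[OF rho_wo] i j by blast
    thus "j \<in> insert i (underS rho i)" using nm j by (auto simp: underS_def)
  qed
  hence "|Field rho| \<le>o |insert i (underS rho i)|" by (rule card_of_mono1)
  moreover have "|insert i (underS rho i)| \<le>o |I|"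
  proof -
    have "I \<noteq> {}" using I_inf by auto
    hence "|{i}| \<le>o |I|" by (rule card_of_singl_ordLeq)
    hence "|{i} \<union> underS rho i| \<le>o |I|"
      by (rule card_of_Un_ordLeq_infinite[OF I_inf _ underS_le[OF i]])
    thus ?thesis by simp
  qed
  ultimately have "|Field rho| \<le>o |I|" by (rule ordLeq_transitive)
  hence r: "rho \<le>o |I|" by (rule ordIso_ordLeq_trans[OF ordIso_symmetric[OF card_of_Field_ordIso[OF rho_card]]])
  have "|I| <o rho" unfolding rho_def by (rule cardSuc_greater[OF card_of_Card_order])
  thus False using not_ordLess_ordLeq r by blast
qed

lemma top_sub_M: "topspace X \<subseteq> M"
proof
  fix y assume y: "y \<in> topspace X"
  show "y \<in> M"
  proof (rule ccontr)
    assume yM: "y \<notin> M"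
    have Mt: "M \<subseteq> topspace X" unfolding M_def using As_top by blast
    obtain g where g: "g \<in> Dat M" and r: "realize (code g) M y" using exists_code[OF Mt y] by blast
    define D where "D = (\<Union>T\<in>Fpow I. \<Union>(g T))"
    have gT: "\<forall>T\<in>Fpow I. g T \<subseteq> FinNE M \<and> |g T| \<le>o |I|" using g by (simp add: Dat_def)
    have DM: "D \<subseteq> M" using gT unfolding D_def FinNE_def by blast
    have "\<forall>T\<in>Fpow I. |\<Union>(g T)| \<le>o |I|"
    proof
      fix T assume T: "T \<in> Fpow I"
      have "\<forall>F\<in>g T. |F| \<le>o |I|" using gT T fin_le_I by (auto simp: FinNE_def)
      moreover have "|g T| \<le>o |I|" using gT T by blast
      ultimately have "|\<Union>F\<in>g T. F| \<le>o |I|"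
        by (intro card_of_UNION_ordLeq_infinite[OF I_inf])
      thus "|\<Union>(g T)| \<le>o |I|" by simp
    qed
    hence "|D| \<le>o |I|" unfolding D_def by (rule card_of_UNION_ordLeq_infinite[OF I_inf FpowI])
    moreover have "D \<subseteq> (\<Union>i\<in>Field (cardSuc |I| ). As i)" using DM unfolding M_def rho_def .
    moreover have "relChain (cardSuc |I| ) As" using chain unfolding rho_def .
    moreover have "\<not> finite (Field |I| )" using I_inf by simp
    ultimately have "\<exists>i\<in>Field (cardSuc |I| ). D \<subseteq> As i"
      using cardSuc_UNION[OF card_of_Card_order] by metis
    then obtain i where i: "i \<in> Field rho" and Di: "D \<subseteq> As i" unfolding rho_def by blast
    obtain j where j: "j \<in> Field rho" "(i, j) \<in> rho" "j \<noteq> i" using nomax[OF i] by blast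
    define B where "B = (\<Union>k\<in>underS rho j. As k)"
    have "As i \<subseteq> B" using j unfolding B_def underS_def by blast
    have "g \<in> Dat (As i)"
      unfolding Dat_def mem_Collect_eq
    proof (intro allI conjI impI)
      fix T assume T: "T \<in> Fpow I"
      show "g T \<subseteq> FinNE (As i)"
      proof
        fix F assume F: "F \<in> g T"
        hence "F \<subseteq> D" using T unfolding D_def by blast
        moreover have "F \<in> FinNE M" using gT T F by blast
        ultimately show "F \<in> FinNE (As i)" using Di by (auto simp: FinNE_def)
      qed
      show "|g T| \<le>o |I|" using gT T by blast
    next
      fix T assume "T \<notin> Fpow I" thus "g T = {}" using g by (simp add: Dat_def)
    qed
    hence gB: "g \<in> Dat B" using Dat_mono[OF \<open>As i \<subseteq> B\<close>] by blast
    have "Qb (code g) \<subseteq> Step B" using gB Qb unfolding Step_def by blast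
    also have "Step B = As j" unfolding B_def by (rule As_eq[symmetric])
    also have "As j \<subseteq> M" using j unfolding M_def by blast
    finally have QM: "Qb (code g) \<subseteq> M" .
    have "realize (code g) (Qb (code g)) y" using realize_mono[OF r QM] .
    moreover have "y \<in> topspace X - Qb (code g)" using y yM QM by blast
    ultimately show False using Qb by blast
  qed
qed

lemma final: "|topspace X| \<le>o |Th|"
  using card_of_mono1[OF top_sub_M] M_le by (rule ordLeq_transitive)

end

context nhp begin

lemma main: "|topspace X| \<le>o |Th|"
proof (cases "\<exists>K. \<forall>Q. Q \<subseteq> topspace X \<and> |Q| \<le>o |Th| \<longrightarrow> (\<exists>y\<in>topspace X - Q. realize K Q y)")
  case True
  then obtain K where "\<forall>Q. Q \<subseteq> topspace X \<and> |Q| \<le>o |Th| \<longrightarrow> (\<exists>y\<in>topspace X - Q. realize K Q y)"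
    by (elim exE)
  thus ?thesis using good_False by blast
next
  case False
  have "\<forall>K. \<exists>Q. Q \<subseteq> topspace X \<and> |Q| \<le>o |Th| \<and> (\<forall>y\<in>topspace X - Q. \<not> realize K Q y)"
  proof
    fix K
    from False obtain Q where "\<not> (Q \<subseteq> topspace X \<and> |Q| \<le>o |Th| \<longrightarrow> (\<exists>y\<in>topspace X - Q. realize K Q y))"
      by blast
    thus "\<exists>Q. Q \<subseteq> topspace X \<and> |Q| \<le>o |Th| \<and> (\<forall>y\<in>topspace X - Q. \<not> realize K Q y)" by blast
  qed
  hence "\<exists>Qb. \<forall>K. Qb K \<subseteq> topspace X \<and> |Qb K| \<le>o |Th| \<and> (\<forall>y\<in>topspace X - Qb K. \<not> realize K (Qb K) y)"
    by (rule choice)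
  then obtain Qb where "\<forall>K. Qb K \<subseteq> topspace X \<and> |Qb K| \<le>o |Th| \<and> (\<forall>y\<in>topspace X - Qb K. \<not> realize K (Qb K) y)"
    by (elim exE)
  hence "nhp2 X I e Th Qb" by (unfold_locales) blast
  thus ?thesis by (rule nhp2.final)
qed

end



lemma le_nonempty: assumes "|A| \<le>o |B|" "A \<noteq> {}" shows "B \<noteq> {}"
proof -
  have "\<exists>f. inj_on f A \<and> f ` A \<subseteq> B" using assms(1) by (subst card_of_ordLeq)
  thus ?thesis using assms(2) by blast
qed

theorem theorem3p1:
  fixes X :: "'a topology" and N :: "'b set" and C :: "'c set" and H :: "'d set"
  assumes "infinite (topspace X)"
    and "is_nh X N" and "is_cellularity X C" and "is_character X H"
  shows "(card_of (topspace X), BNF_Cardinal_Arithmetic.cexp (card_of N) (BNF_Cardinal_Arithmetic.cprod (card_of C) (card_of H))) \<in> ordLeq"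
proof -
  note inf = assms(1)
  obtain Snh :: "'a set" where Snh: "is_card_sup {A. finitely_non_hausdorff X A} Snh"
    and Niso: "|N| =o |UNIV::unit set| +c |Snh|"
    using assms(2) unfolding is_nh_def by blast
  obtain Sc :: "'a set set set" where Sc: "is_card_sup {\<U>. cellular_family X \<U>} Sc"
    and Ciso: "|C| =o |Sc| +c natLeq"
    using assms(3) unfolding is_cellularity_def by blast
  obtain Sh :: "'a set set set" where Sh: "is_card_sup {\<B>. \<exists>x\<in>topspace X. minimal_local_base X x \<B>} Sh"
    and Hiso: "|H| =o |Sh|"
    using assms(4) unfolding is_character_def by blast
  have "natLeq \<le>o |Sc| +c natLeq" by (rule ordLeq_csum2[OF natLeq_Card_order])
  hence "natLeq \<le>o |C|" using ordLeq_ordIso_trans[OF _ ordIso_symmetric[OF Ciso]] by blast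
  hence Cinf: "infinite C" using infinite_iff_natLeq_ordLeq by blast
  have minb: "\<exists>\<B>. minimal_local_base X x \<B>" if x: "x \<in> topspace X" for x
  proof -
    define R where "R = card_of ` {\<B>. local_base X x \<B>}"
    have "local_base X x {U. openin X U \<and> x \<in> U}" unfolding local_base_def by blast
    hence "R \<noteq> {}" unfolding R_def by blast
    moreover have "\<forall>r\<in>R. Card_order r" unfolding R_def using card_of_Card_order by blast
    ultimately obtain r where r: "r \<in> R" "\<forall>r'\<in>R. r \<le>o r'"
      using exists_minim_Card_order[of R] by blast
    then obtain \<B> where B: "local_base X x \<B>" "r = |\<B>|" unfolding R_def by blast
    have "minimal_local_base X x \<B>" unfolding minimal_local_base_def
      using B r unfolding R_def by blast
    thus ?thesis by blast
  qed
  have baseH: "\<exists>\<B>. local_base X x \<B> \<and> |\<B>| \<le>o |H| \<and> \<B> \<noteq> {}" if x: "x \<in> topspace X" for x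
  proof -
    obtain \<B> where B: "minimal_local_base X x \<B>" using minb[OF x] by blast
    hence "|\<B>| \<le>o |Sh|" using Sh x unfolding is_card_sup_def by blast
    hence "|\<B>| \<le>o |H|" by (rule ordLeq_ordIso_trans[OF _ ordIso_symmetric[OF Hiso]])
    moreover have "local_base X x \<B>" using B unfolding minimal_local_base_def by blast
    moreover have "\<B> \<noteq> {}"
    proof -
      have "openin X (topspace X)" by simp
      then obtain B0 where "B0 \<in> \<B>" using \<open>local_base X x \<B>\<close> x unfolding local_base_def by blast
      thus ?thesis by blast
    qed
    ultimately show ?thesis by blast
  qed
  have Hne: "H \<noteq> {}"
  proof -
    obtain x where x: "x \<in> topspace X" using inf by fastforce
    obtain \<B> where "local_base X x \<B>" "|\<B>| \<le>o |H|" "\<B> \<noteq> {}" using baseH[OF x] by blast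
    thus ?thesis using le_nonempty by blast
  qed
  define I where "I = C \<times> H"
  have Cne: "C \<noteq> {}" using Cinf by auto
  have CI: "|C| \<le>o |I|" unfolding I_def by (rule card_of_Times1[OF Hne])
  have HI: "|H| \<le>o |I|" unfolding I_def by (rule card_of_Times2[OF Cne])
  have Iinf: "infinite I" using card_of_ordLeq_infinite[OF CI Cinf] .
  have "\<forall>x\<in>topspace X. \<exists>f. (\<forall>i\<in>I. openin X (f i) \<and> x \<in> f i) \<and>
          (\<forall>V. openin X V \<and> x \<in> V \<longrightarrow> (\<exists>i\<in>I. f i \<subseteq> V))"
  proof
    fix x assume x: "x \<in> topspace X"
    obtain \<B> where B: "local_base X x \<B>" "|\<B>| \<le>o |H|" "\<B> \<noteq> {}" using baseH[OF x] by blast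
    have "|\<B>| \<le>o |I|" using B(2) HI by (rule ordLeq_transitive)
    hence "\<exists>g. g ` I = \<B>" by (subst card_of_ordLeq2[OF B(3)])
    then obtain g where g: "g ` I = \<B>" by (elim exE)
    show "\<exists>f. (\<forall>i\<in>I. openin X (f i) \<and> x \<in> f i) \<and>
          (\<forall>V. openin X V \<and> x \<in> V \<longrightarrow> (\<exists>i\<in>I. f i \<subseteq> V))"
    proof (intro exI conjI)
      show "\<forall>i\<in>I. openin X (g i) \<and> x \<in> g i" using B(1) g unfolding local_base_def by blast
      show "\<forall>V. openin X V \<and> x \<in> V \<longrightarrow> (\<exists>i\<in>I. g i \<subseteq> V)" using B(1) g unfolding local_base_def by blast
    qed
  qed
  hence "\<exists>e. \<forall>x\<in>topspace X. (\<forall>i\<in>I. openin X (e x i) \<and> x \<in> e x i) \<and>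
          (\<forall>V. openin X V \<and> x \<in> V \<longrightarrow> (\<exists>i\<in>I. e x i \<subseteq> V))" by (rule bchoice)
  then obtain e where e: "\<forall>x\<in>topspace X. (\<forall>i\<in>I. openin X (e x i) \<and> x \<in> e x i) \<and>
          (\<forall>V. openin X V \<and> x \<in> V \<longrightarrow> (\<exists>i\<in>I. e x i \<subseteq> V))" by (elim exE)
  have cell: "|\<U>| \<le>o |I|" if "cellular_family X \<U>" for \<U>
  proof -
    have "|\<U>| \<le>o |Sc|" using Sc that unfolding is_card_sup_def by blast
    moreover have "|Sc| \<le>o |Sc| +c natLeq" by (rule ordLeq_csum1[OF card_of_Card_order])
    ultimately have "|\<U>| \<le>o |Sc| +c natLeq" by (rule ordLeq_transitive)
    hence "|\<U>| \<le>o |C|" by (rule ordLeq_ordIso_trans[OF _ ordIso_symmetric[OF Ciso]])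
    thus ?thesis using CI by (rule ordLeq_transitive)
  qed
  have fnhN: "|A| \<le>o |N|" if "finitely_non_hausdorff X A" for A
  proof -
    have "|A| \<le>o |Snh|" using Snh that unfolding is_card_sup_def by blast
    moreover have "|Snh| \<le>o |UNIV::unit set| +c |Snh|" by (rule ordLeq_csum2[OF card_of_Card_order])
    ultimately have "|A| \<le>o |UNIV::unit set| +c |Snh|" by (rule ordLeq_transitive)
    thus ?thesis by (rule ordLeq_ordIso_trans[OF _ ordIso_symmetric[OF Niso]])
  qed
  have CnI: "Cnotzero |I|"
    using Cinfinite_Cnotzero[of "|I|"] Iinf by (simp add: cinfinite_def card_of_Card_order)
  have NT: "|N| \<le>o |Func I N|"
    using ordLeq_cexp1[OF CnI card_of_Card_order[of N]] by (simp add: cexp_def)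
  have fnh: "|A| \<le>o |Func I N|" if "finitely_non_hausdorff X A" for A
    using fnhN[OF that] NT by (rule ordLeq_transitive)
  have Snhne: "Snh \<noteq> {}"
  proof -
    obtain x where x: "x \<in> topspace X" using inf by fastforce
    have "finitely_non_hausdorff X {x}"
      unfolding finitely_non_hausdorff_def
    proof (intro conjI allI impI)
      show "{x} \<noteq> {}" by simp
      show "{x} \<subseteq> topspace X" using x by simp
      fix F U assume A: "F \<subseteq> {x} \<and> finite F \<and> F \<noteq> {} \<and> (\<forall>x\<in>F. openin X (U x) \<and> x \<in> U x)"
      hence "F = {x}" by blast
      thus "(\<Inter>x\<in>F. U x) \<noteq> {}" using A by auto
    qed
    hence "|{x}| \<le>o |Snh|" using Snh unfolding is_card_sup_def by blast
    thus ?thesis using le_nonempty by blast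
  qed
  have two: "ctwo \<le>o |N|"
  proof -
    obtain s where s: "s \<in> Snh" using Snhne by blast
    have "|UNIV::bool set| \<le>o |Field ( |UNIV::unit set| +c |Snh| )|"
      by (rule card_of_ordLeqI[of "\<lambda>b. if b then Inl () else Inr s"])
         (auto simp: inj_on_def Field_csum s)
    also have "|Field ( |UNIV::unit set| +c |Snh| )| =o |UNIV::unit set| +c |Snh|"
      by (rule card_of_Field_ordIso[OF Card_order_csum])
    also have "|UNIV::unit set| +c |Snh| =o |N|" by (rule ordIso_symmetric[OF Niso])
    finally show ?thesis unfolding ctwo_def .
  qed
  have IT: "|I| <o |Func I N|"
  proof -
    have "|I| <o ctwo ^c |I|" by (rule ordLess_ctwo_cexp[OF card_of_Card_order])
    also have "ctwo ^c |I| \<le>o |N| ^c |I|" by (rule cexp_mono1[OF two card_of_Card_order])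
    finally show ?thesis by (simp add: cexp_def)
  qed
  have FT: "|Func I (Func I N)| \<le>o |Func I N|"
  proof -
    have "|I \<times> I| \<le>o |I|" using card_of_Times_same_infinite[OF Iinf] ordIso_iff_ordLeq by blast
    hence "|N| ^c |I \<times> I| \<le>o |N| ^c |I|"
      by (rule cexp_mono2'[OF _ card_of_Card_order]) (use Iinf in auto)
    hence "|Func (I \<times> I) N| \<le>o |Func I N|" by (simp add: cexp_def)
    thus ?thesis using ordIso_ordLeq_trans[OF ordIso_symmetric[OF card_of_Func_Times]] by blast
  qed
  interpret nhp X I e "Func I N"
  proof
    show "infinite I" by (rule Iinf)
    show "\<And>x i. x \<in> topspace X \<Longrightarrow> i \<in> I \<Longrightarrow> openin X (e x i) \<and> x \<in> e x i" using e by blast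
    show "\<And>x V. x \<in> topspace X \<Longrightarrow> openin X V \<Longrightarrow> x \<in> V \<Longrightarrow> \<exists>i\<in>I. e x i \<subseteq> V" using e by blast
    show "\<And>\<U>. cellular_family X \<U> \<Longrightarrow> |\<U>| \<le>o |I|" by (rule cell)
    show "|I| <o |Func I N|" by (rule IT)
    show "|Func I (Func I N)| \<le>o |Func I N|" by (rule FT)
    show "\<And>A. finitely_non_hausdorff X A \<Longrightarrow> |A| \<le>o |Func I N|" by (rule fnh)
  qed
  have "|topspace X| \<le>o |Func I N|" by (rule main)
  thus ?thesis unfolding cexp_def cprod_def Field_card_of I_def .
qed


end
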